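(* Let $(X_t)$ be a time-homogeneous Markov chain (random walk) on a countable set of sites. Let $S$ be a finite set of occupied sites, let $0$ be a source site, and assume that from any site the walk a.s. eventually leaves any finite set. Let $x\ne y$ be sites not in $S$. Consider the following two procedures. Sequential: particle 1 starts at $0$ and walks until it first visits a site outside $S$, where it sticks. Then particle 2 starts at $0$ and walks until it first visits a site outside the enlarged cluster, where it sticks. Simultaneous: both particles start at $0$ and take steps synchronously, independently. Each particle sticks at the first site it visits that is unoccupied at that moment, and a stuck particle's site becomes occupied immediately. If both particles first reach the same unoccupied site at the same time, particle 1 sticks there and particle 2 continues. Then the probability that the final cluster equals $S\cup\{x,y\}$ is the same under both procedures. Consequently the two procedures yield the same probability distribution of final clusters. *)

theory Defs
  imports "HOL-Probability.Probability"
begin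

text \<open>A time-homogeneous Markov chain on a countable site type 'a is given by
its transition kernel K :: 'a => 'a pmf.\<close>

fun path_weight :: "('a \<Rightarrow> 'a pmf) \<Rightarrow> 'a list \<Rightarrow> ennreal" where
  "path_weight K [] = 1"
| "path_weight K [z] = 1"
| "path_weight K (z # z' # zs) = ennreal (pmf (K z) z') * path_weight K (z' # zs)"

definition first_exit_path :: "'a set \<Rightarrow> 'a \<Rightarrow> 'a list \<Rightarrow> bool" where
  "first_exit_path A z p \<longleftrightarrow> p \<noteq> [] \<and> hd p = z \<and> last p \<notin> A \<and>
      (\<forall>i < length p - 1. p ! i \<in> A)"

definition exit_prob :: "('a \<Rightarrow> 'a pmf) \<Rightarrow> 'a set \<Rightarrow> 'a \<Rightarrow> ennreal" where
  "exit_prob K A z = (\<Sum>\<^sub>\<infinity> p \<in> {p. first_exit_path A z p}. path_weight K p)"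

definition seq_valid :: "'a set \<Rightarrow> 'a \<Rightarrow> 'a list \<Rightarrow> 'a list \<Rightarrow> bool" where
  "seq_valid S s0 p1 p2 \<longleftrightarrow>
     first_exit_path S s0 p1 \<and> first_exit_path (S \<union> {last p1}) s0 p2"

definition seq_prob :: "('a \<Rightarrow> 'a pmf) \<Rightarrow> 'a set \<Rightarrow> 'a \<Rightarrow> 'a set \<Rightarrow> ennreal" where
  "seq_prob K S s0 C =
     (\<Sum>\<^sub>\<infinity> (p1, p2) \<in> {(p1, p2). seq_valid S s0 p1 p2 \<and> S \<union> {last p1, last p2} = C}.
        path_weight K p1 * path_weight K p2)"

text \<open>Simultaneous procedure: both particles start at s0 and move synchronously and
independently; particle i is stuck at time Ti = length pi - 1.  At time t,
particle 1 sees as occupied S together with particle 2's site if particle 2 stuck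
strictly before t; particle 2 sees S together with particle 1's site if particle 1
stuck at time \<le> t (ties at the same site are won by particle 1).\<close>

definition occ1 :: "'a set \<Rightarrow> 'a list \<Rightarrow> nat \<Rightarrow> 'a set" where
  "occ1 S p2 t = S \<union> (if length p2 - 1 < t then {last p2} else {})"

definition occ2 :: "'a set \<Rightarrow> 'a list \<Rightarrow> nat \<Rightarrow> 'a set" where
  "occ2 S p1 t = S \<union> (if length p1 - 1 \<le> t then {last p1} else {})"

definition sim_valid :: "'a set \<Rightarrow> 'a \<Rightarrow> 'a list \<Rightarrow> 'a list \<Rightarrow> bool" where
  "sim_valid S s0 p1 p2 \<longleftrightarrow>
     p1 \<noteq> [] \<and> p2 \<noteq> [] \<and> hd p1 = s0 \<and> hd p2 = s0 \<and>
     (\<forall>t < length p1 - 1. p1 ! t \<in> occ1 S p2 t) \<and> last p1 \<notin> occ1 S p2 (length p1 - 1) \<and>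
     (\<forall>t < length p2 - 1. p2 ! t \<in> occ2 S p1 t) \<and> last p2 \<notin> occ2 S p1 (length p2 - 1)"

definition sim_prob :: "('a \<Rightarrow> 'a pmf) \<Rightarrow> 'a set \<Rightarrow> 'a \<Rightarrow> 'a set \<Rightarrow> ennreal" where
  "sim_prob K S s0 C =
     (\<Sum>\<^sub>\<infinity> (p1, p2) \<in> {(p1, p2). sim_valid S s0 p1 p2 \<and> S \<union> {last p1, last p2} = C}.
        path_weight K p1 * path_weight K p2)"

end

theory Submission
  imports Defs
begin


definition fx :: "'a set \<Rightarrow> 'a list \<Rightarrow> nat" where
  "fx S p = (LEAST i. p ! i \<notin> S)"

lemma fx_props:
  assumes "i < length p" "p ! i \<notin> S"
  shows "fx S p \<le> i" "p ! fx S p \<notin> S" "\<And>j. j < fx S p \<Longrightarrow> p ! j \<in> S"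
proof -
  show "fx S p \<le> i" using assms unfolding fx_def by (simp add: Least_le)
  show "p ! fx S p \<notin> S" using assms(2) unfolding fx_def by (metis (mono_tags, lifting) LeastI)
  show "\<And>j. j < fx S p \<Longrightarrow> p ! j \<in> S" unfolding fx_def using not_less_Least by blast
qed

lemma fx_eq:
  assumes "p ! i \<notin> S" "\<And>j. j < i \<Longrightarrow> p ! j \<in> S"
  shows "fx S p = i"
  unfolding fx_def using assms
  by (metis (mono_tags, lifting) Least_equality not_less)

lemma pw_append:
  "path_weight K (xs @ y # ys) = path_weight K (xs @ [y]) * path_weight K (y # ys)"
proof (induction xs rule: path_weight.induct)
  case (1 K) then show ?case by simp
next
  case (2 K z) then show ?case by simp
next
  case (3 K z z' zs) then show ?case by (simp add: mult.assoc)
qed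

definition Psi :: "'a set \<Rightarrow> 'a list \<times> 'a list \<Rightarrow> 'a list \<times> 'a list" where
  "Psi S pp = (case pp of (p1, p2) \<Rightarrow>
     (if fx S p2 < length p1 - 1 \<and> p2 ! fx S p2 = last p1
      then (p1 @ drop (fx S p2 + 1) p2, take (fx S p2 + 1) p2) else (p1, p2)))"

definition Psi' :: "'a set \<Rightarrow> 'a list \<times> 'a list \<Rightarrow> 'a list \<times> 'a list" where
  "Psi' S qq = (case qq of (q1, q2) \<Rightarrow>
     (if length q2 - 1 < length q1 - 1 \<and> q1 ! fx S q1 = last q2
      then (take (fx S q1 + 1) q1, q2 @ drop (fx S q1 + 1) q1) else (q1, q2)))"

lemma fwd_swap:
  assumes v: "seq_valid S s0 p1 p2"
    and c: "fx S p2 < length p1 - 1" "p2 ! fx S p2 = last p1"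
  defines "k \<equiv> fx S p2"
  shows "sim_valid S s0 (p1 @ drop (k+1) p2) (take (k+1) p2)"
    "last (p1 @ drop (k+1) p2) = last p2" "last (take (k+1) p2) = last p1"
    "path_weight K (p1 @ drop (k+1) p2) * path_weight K (take (k+1) p2)
       = path_weight K p1 * path_weight K p2"
    "Psi' S (p1 @ drop (k+1) p2, take (k+1) p2) = (p1, p2)"
proof -
  define a where "a = last p1"
  have p1: "p1 \<noteq> []" "hd p1 = s0" "a \<notin> S" "\<And>i. i < length p1 - 1 \<Longrightarrow> p1 ! i \<in> S"
    using v by (auto simp: seq_valid_def first_exit_path_def a_def)
  have p2: "p2 \<noteq> []" "hd p2 = s0" "last p2 \<notin> S" "last p2 \<noteq> a"
      "\<And>i. i < length p2 - 1 \<Longrightarrow> p2 ! i \<in> S \<union> {a}"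
    using v by (auto simp: seq_valid_def first_exit_path_def a_def)
  have lp2: "p2 ! (length p2 - 1) \<notin> S" using p2 by (simp add: last_conv_nth)
  have kl: "k \<le> length p2 - 1" "p2 ! k \<notin> S" "\<And>j. j < k \<Longrightarrow> p2 ! j \<in> S"
    using fx_props[OF _ lp2] p2(1) unfolding k_def by auto
  have pk: "p2 ! k = a" using c unfolding k_def a_def by simp
  have kl2: "k < length p2 - 1"
    using kl(1) pk p2 by (metis last_conv_nth le_neq_implies_less)
  have kc: "k < length p1 - 1" using c k_def by simp
  define q1 where "q1 = p1 @ drop (k+1) p2"
  define q2 where "q2 = take (k+1) p2"
  have lq1: "last q1 = last p2" using kl2 by (simp add: q1_def)
  have lq2: "last q2 = a" using kl2 pk by (simp add: q2_def take_Suc_conv_app_nth)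
  have len2: "length q2 - 1 = k" using kl2 by (simp add: q2_def)
  have len1: "length q1 = length p1 + (length p2 - (k+1))" by (simp add: q1_def)
  show "last (p1 @ drop (k+1) p2) = last p2" using lq1 q1_def by simp
  show "last (take (k+1) p2) = last p1" using lq2 q2_def a_def by simp
  show "sim_valid S s0 (p1 @ drop (k+1) p2) (take (k+1) p2)"
    unfolding q1_def[symmetric] q2_def[symmetric] sim_valid_def
  proof (intro conjI allI impI)
    show "q1 \<noteq> []" "q2 \<noteq> []" using p1 p2 kl2 by (auto simp: q1_def q2_def)
    show "hd q1 = s0" using p1 by (simp add: q1_def)
    show "hd q2 = s0" using p2 by (simp add: q2_def hd_take)
    fix t assume t: "t < length q1 - 1"
    show "q1 ! t \<in> occ1 S q2 t"
    proof (cases "t < length p1 - 1")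
      case True
      then have "t < length p1" by linarith
      then have "q1 ! t = p1 ! t" by (simp add: q1_def nth_append)
      then show ?thesis using p1 True by (simp add: occ1_def)
    next
      case False
      then consider "t = length p1 - 1" | "t \<ge> length p1" by linarith
      then show ?thesis
      proof cases
        case 1 then show ?thesis using p1 kc len2 lq2
          by (simp add: q1_def nth_append occ1_def a_def last_conv_nth)
      next
        case 2
        have "q1 ! t = p2 ! (k + 1 + (t - length p1))"
          using 2 kl2 by (simp add: q1_def nth_append)
        moreover have "k + 1 + (t - length p1) < length p2 - 1" using 2 t len1 kl2 by linarith
        ultimately have "q1 ! t \<in> S \<union> {a}" using p2(5) by simp
        then show ?thesis using 2 kc len2 lq2 by (auto simp: occ1_def)
      qed
    qed
  next
    show "last q1 \<notin> occ1 S q2 (length q1 - 1)"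
      using lq1 lq2 p2 by (auto simp: occ1_def)
  next
    fix t assume t: "t < length q2 - 1"
    then show "q2 ! t \<in> occ2 S q1 t" using kl len2 by (simp add: q2_def occ2_def)
  next
    show "last q2 \<notin> occ2 S q1 (length q2 - 1)"
      using lq1 lq2 p1 p2 by (auto simp: occ2_def)
  qed
  show "path_weight K (p1 @ drop (k+1) p2) * path_weight K (take (k+1) p2)
       = path_weight K p1 * path_weight K p2"
  proof -
    have e1: "p1 = butlast p1 @ [a]" using p1 a_def by simp
    have e2: "drop k p2 = a # drop (k+1) p2" proof -
      have "k < length p2" using kl2 by linarith
      then show ?thesis using pk Cons_nth_drop_Suc[of k p2] by simp
    qed
    have e3: "take (k+1) p2 = take k p2 @ [a]" using kl2 pk by (simp add: take_Suc_conv_app_nth)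
    have e4: "p2 = take k p2 @ a # drop (k+1) p2" using e2 by (metis append_take_drop_id)
    have "p1 @ drop (k+1) p2 = butlast p1 @ a # drop (k+1) p2" using e1 by (metis append.assoc append_Cons append_Nil)
    then have "path_weight K (p1 @ drop (k+1) p2) = path_weight K p1 * path_weight K (a # drop (k+1) p2)"
      using e1 pw_append by metis
    moreover have "path_weight K p2 = path_weight K (take (k+1) p2) * path_weight K (a # drop (k+1) p2)"
      using e4 e3 pw_append by metis
    ultimately show ?thesis by (simp add: mult_ac)
  qed
  show "Psi' S (p1 @ drop (k+1) p2, take (k+1) p2) = (p1, p2)"
  proof -
    have fq: "fx S q1 = length p1 - 1"
      apply (rule fx_eq)
      using p1 by (auto simp: q1_def nth_append a_def last_conv_nth)
    have "length q2 - 1 < length q1 - 1" using len2 len1 kc by linarith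
    moreover have "q1 ! fx S q1 = last q2" using fq lq2 p1
      by (simp add: q1_def nth_append a_def last_conv_nth)
    moreover have "take (fx S q1 + 1) q1 = p1" using fq p1 by (simp add: q1_def)
    moreover have "q2 @ drop (fx S q1 + 1) q1 = p2" using fq p1 by (simp add: q1_def q2_def)
    ultimately show ?thesis unfolding Psi'_def q1_def[symmetric] q2_def[symmetric] by simp
  qed
qed

lemma fwd_id:
  assumes v: "seq_valid S s0 p1 p2"
    and c: "\<not> (fx S p2 < length p1 - 1 \<and> p2 ! fx S p2 = last p1)"
  shows "sim_valid S s0 p1 p2" "Psi' S (p1, p2) = (p1, p2)"
proof -
  define a where "a = last p1"
  have p1: "p1 \<noteq> []" "hd p1 = s0" "a \<notin> S" "\<And>i. i < length p1 - 1 \<Longrightarrow> p1 ! i \<in> S"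
    using v by (auto simp: seq_valid_def first_exit_path_def a_def)
  have p2: "p2 \<noteq> []" "hd p2 = s0" "last p2 \<notin> S" "last p2 \<noteq> a"
      "\<And>i. i < length p2 - 1 \<Longrightarrow> p2 ! i \<in> S \<union> {a}"
    using v by (auto simp: seq_valid_def first_exit_path_def a_def)
  have lp2: "p2 ! (length p2 - 1) \<notin> S" using p2 by (simp add: last_conv_nth)
  define k where "k = fx S p2"
  have kl: "k \<le> length p2 - 1" "p2 ! k \<notin> S" "\<And>j. j < k \<Longrightarrow> p2 ! j \<in> S"
    using fx_props[OF _ lp2] p2(1) unfolding k_def by auto
  have fp1: "fx S p1 = length p1 - 1"
    by (rule fx_eq) (use p1 in \<open>auto simp: a_def last_conv_nth\<close>)
  show "Psi' S (p1, p2) = (p1, p2)"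
    unfolding Psi'_def using fp1 p1 p2 by (auto simp: a_def last_conv_nth)
  show "sim_valid S s0 p1 p2"
    unfolding sim_valid_def
  proof (intro conjI allI impI)
    show "p1 \<noteq> []" "p2 \<noteq> []" "hd p1 = s0" "hd p2 = s0" using p1 p2 by auto
    fix t assume "t < length p1 - 1"
    then show "p1 ! t \<in> occ1 S p2 t" using p1 by (simp add: occ1_def)
  next
    show "last p1 \<notin> occ1 S p2 (length p1 - 1)" using p1 p2 by (auto simp: occ1_def a_def)
  next
    fix t assume t: "t < length p2 - 1"
    show "p2 ! t \<in> occ2 S p1 t"
    proof (cases "p2 ! t \<in> S")
      case True then show ?thesis by (simp add: occ2_def)
    next
      case False
      then have pa: "p2 ! t = a" using p2(5)[OF t] by simp
      have "k \<le> t" using False kl(3) by (meson not_le)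
      then have "k < length p2 - 1" using t by linarith
      then have "p2 ! k = a" using p2(5) kl(2) by blast
      then have "\<not> k < length p1 - 1" using c unfolding k_def a_def by blast
      then have "length p1 - 1 \<le> t" using \<open>k \<le> t\<close> by linarith
      then show ?thesis using pa by (simp add: occ2_def a_def)
    qed
  next
    show "last p2 \<notin> occ2 S p1 (length p2 - 1)" using p2 by (auto simp: occ2_def a_def)
  qed
qed

lemma bwd_swap:
  assumes v: "sim_valid S s0 q1 q2"
    and c: "length q2 - 1 < length q1 - 1" "q1 ! fx S q1 = last q2"
  defines "s \<equiv> fx S q1"
  shows "seq_valid S s0 (take (s+1) q1) (q2 @ drop (s+1) q1)"
    "last (take (s+1) q1) = last q2" "last (q2 @ drop (s+1) q1) = last q1"
    "Psi S (take (s+1) q1, q2 @ drop (s+1) q1) = (q1, q2)"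
proof -
  define c0 where "c0 = last q2"
  have q1: "q1 \<noteq> []" "hd q1 = s0" "\<And>t. t < length q1 - 1 \<Longrightarrow> q1 ! t \<in> occ1 S q2 t"
      "last q1 \<notin> occ1 S q2 (length q1 - 1)"
    using v by (auto simp: sim_valid_def)
  have q2: "q2 \<noteq> []" "hd q2 = s0" "\<And>t. t < length q2 - 1 \<Longrightarrow> q2 ! t \<in> occ2 S q1 t"
      "last q2 \<notin> occ2 S q1 (length q2 - 1)"
    using v by (auto simp: sim_valid_def)
  have q2S: "\<And>t. t < length q2 - 1 \<Longrightarrow> q2 ! t \<in> S"
    using q2(3) c(1) by (auto simp: occ2_def split: if_splits)
  have c0S: "c0 \<notin> S" using q2(4) by (simp add: occ2_def c0_def)
  have lq1: "last q1 \<notin> S" "last q1 \<noteq> c0" using q1(4) c(1) by (auto simp: occ1_def c0_def)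
  have lq1': "q1 ! (length q1 - 1) \<notin> S" using lq1 q1 by (simp add: last_conv_nth)
  have sl: "s \<le> length q1 - 1" "q1 ! s \<notin> S" "\<And>j. j < s \<Longrightarrow> q1 ! j \<in> S"
    using fx_props[OF _ lq1'] q1(1) unfolding s_def by auto
  have qs: "q1 ! s = c0" using c(2) s_def c0_def by simp
  have sl2: "s < length q1 - 1" using sl(1) qs lq1 q1(1) by (metis last_conv_nth le_neq_implies_less)
  have sT2: "length q2 - 1 < s"
    using q1(3)[OF sl2] sl(2) by (auto simp: occ1_def split: if_splits)
  define p1 where "p1 = take (s+1) q1"
  define p2 where "p2 = q2 @ drop (s+1) q1"
  have lp1: "last p1 = c0" using sl2 qs by (simp add: p1_def take_Suc_conv_app_nth)
  have lp2: "last p2 = last q1" using sl2 by (simp add: p2_def)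
  show "last (take (s+1) q1) = last q2" using lp1 p1_def c0_def by simp
  show "last (q2 @ drop (s+1) q1) = last q1" using lp2 p2_def by simp
  have fe1: "first_exit_path S s0 p1"
    unfolding first_exit_path_def
  proof (intro conjI allI impI)
    show "p1 \<noteq> []" "hd p1 = s0" using q1 by (auto simp: p1_def hd_take)
    show "last p1 \<notin> S" using lp1 c0S by simp
    fix i assume "i < length p1 - 1"
    then show "p1 ! i \<in> S" using sl(3) sl2 by (simp add: p1_def)
  qed
  have fe2: "first_exit_path (S \<union> {last p1}) s0 p2"
    unfolding first_exit_path_def
  proof (intro conjI allI impI)
    show "p2 \<noteq> []" "hd p2 = s0" using q2 by (auto simp: p2_def)
    show "last p2 \<notin> S \<union> {last p1}" using lp2 lp1 lq1 by simp
    fix i assume i: "i < length p2 - 1"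
    show "p2 ! i \<in> S \<union> {last p1}"
    proof (cases "i < length q2 - 1")
      case True
      then have "i < length q2" by linarith
      then have "p2 ! i = q2 ! i" by (simp add: p2_def nth_append)
      then show ?thesis using q2S True by simp
    next
      case False
      then consider "i = length q2 - 1" | "i \<ge> length q2" by linarith
      then show ?thesis
      proof cases
        case 1 then show ?thesis using q2(1) lp1
          by (simp add: p2_def nth_append c0_def last_conv_nth)
      next
        case 2
        have "p2 ! i = q1 ! (s + 1 + (i - length q2))"
          using 2 sl2 by (simp add: p2_def nth_append)
        moreover have "s + 1 + (i - length q2) < length q1 - 1" using 2 i sl2 by (simp add: p2_def)
        ultimately have "p2 ! i \<in> occ1 S q2 (s + 1 + (i - length q2))" using q1(3) by simp
        then show ?thesis using lp1 by (auto simp: occ1_def c0_def split: if_splits)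
      qed
    qed
  qed
  show "seq_valid S s0 (take (s+1) q1) (q2 @ drop (s+1) q1)"
    using fe1 fe2 unfolding seq_valid_def p1_def p2_def by simp
  show "Psi S (take (s+1) q1, q2 @ drop (s+1) q1) = (q1, q2)"
  proof -
    have fk: "fx S p2 = length q2 - 1"
      apply (rule fx_eq)
      using q2 q2S c0S by (auto simp: p2_def nth_append c0_def last_conv_nth)
    have "fx S p2 < length p1 - 1" using fk sT2 sl2 by (simp add: p1_def)
    moreover have "p2 ! fx S p2 = last p1" using fk lp1 q2(1)
      by (simp add: p2_def nth_append c0_def last_conv_nth)
    moreover have "p1 @ drop (fx S p2 + 1) p2 = q1" using fk q2(1) by (simp add: p1_def p2_def)
    moreover have "take (fx S p2 + 1) p2 = q2" using fk q2(1) by (simp add: p2_def)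
    ultimately show ?thesis unfolding Psi_def p1_def[symmetric] p2_def[symmetric] by simp
  qed
qed

lemma bwd_id:
  assumes v: "sim_valid S s0 q1 q2"
    and c: "\<not> (length q2 - 1 < length q1 - 1 \<and> q1 ! fx S q1 = last q2)"
  shows "seq_valid S s0 q1 q2" "Psi S (q1, q2) = (q1, q2)"
proof -
  have q1: "q1 \<noteq> []" "hd q1 = s0" "\<And>t. t < length q1 - 1 \<Longrightarrow> q1 ! t \<in> occ1 S q2 t"
      "last q1 \<notin> occ1 S q2 (length q1 - 1)"
    using v by (auto simp: sim_valid_def)
  have q2: "q2 \<noteq> []" "hd q2 = s0" "\<And>t. t < length q2 - 1 \<Longrightarrow> q2 ! t \<in> occ2 S q1 t"
      "last q2 \<notin> occ2 S q1 (length q2 - 1)"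
    using v by (auto simp: sim_valid_def)
  have lq1S: "last q1 \<notin> S" using q1(4) by (simp add: occ1_def)
  have lq2S: "last q2 \<notin> S" using q2(4) by (simp add: occ2_def)
  have "seq_valid S s0 q1 q2 \<and> Psi S (q1, q2) = (q1, q2)"
  proof (cases "length q1 - 1 \<le> length q2 - 1")
    case le: True
    have A: "\<And>t. t < length q1 - 1 \<Longrightarrow> q1 ! t \<in> S"
      using q1(3) le by (auto simp: occ1_def split: if_splits)
    have B: "q2 ! t \<in> S \<union> {last q1}" if t: "t < length q2 - 1" for t
    proof -
      have "q2 ! t \<in> occ2 S q1 t" using q2(3)[OF t] .
      then show ?thesis by (auto simp: occ2_def split: if_splits)
    qed
    have C: "last q2 \<notin> S \<union> {last q1}" using q2(4) le by (simp add: occ2_def)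
    have sv: "seq_valid S s0 q1 q2"
      unfolding seq_valid_def first_exit_path_def using q1 q2 A B C lq1S by blast
    have "\<not> fx S q2 < length q1 - 1"
    proof
      assume h: "fx S q2 < length q1 - 1"
      have lq2': "q2 ! (length q2 - 1) \<notin> S" using lq2S q2 by (simp add: last_conv_nth)
      have f: "q2 ! fx S q2 \<notin> S" using fx_props(2)[OF _ lq2'] q2(1) by simp
      have "fx S q2 < length q2 - 1" using h le by linarith
      then have "q2 ! fx S q2 \<in> occ2 S q1 (fx S q2)" using q2(3) by blast
      then show False using f h by (simp add: occ2_def)
    qed
    then show ?thesis using sv by (simp add: Psi_def)
  next
    case lt: False
    then have c': "q1 ! fx S q1 \<noteq> last q2" using c by linarith
    have lq1': "q1 ! (length q1 - 1) \<notin> S" using lq1S q1 by (simp add: last_conv_nth)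
    have A: "\<And>t. t < length q1 - 1 \<Longrightarrow> q1 ! t \<in> S"
    proof (rule ccontr)
      fix t assume t: "t < length q1 - 1" and n: "q1 ! t \<notin> S"
      have "fx S q1 \<le> t" using fx_props(1)[of t q1 S] t n by linarith
      then have "fx S q1 < length q1 - 1" using t by linarith
      moreover have "q1 ! fx S q1 \<notin> S" using fx_props(2)[OF _ lq1'] q1(1) by simp
      ultimately have "q1 ! fx S q1 = last q2" using q1(3)[of "fx S q1"] by (auto simp: occ1_def split: if_splits)
      then show False using c' by simp
    qed
    have q2S: "\<And>t. t < length q2 - 1 \<Longrightarrow> q2 ! t \<in> S"
      using q2(3) lt by (auto simp: occ2_def split: if_splits)
    have ne: "last q2 \<noteq> last q1" using q1(4) lt by (auto simp: occ1_def)
    have C: "last q2 \<notin> S \<union> {last q1}" using lq2S ne by simp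
    have sv: "seq_valid S s0 q1 q2"
      unfolding seq_valid_def first_exit_path_def using q1 q2 A q2S C lq1S by blast
    have fk: "fx S q2 = length q2 - 1"
      by (rule fx_eq) (use q2S lq2S q2(1) in \<open>auto simp: last_conv_nth\<close>)
    have "q2 ! fx S q2 \<noteq> last q1" using fk ne q2(1) by (simp add: last_conv_nth)
    then show ?thesis using sv by (simp add: Psi_def)
  qed
  then show "seq_valid S s0 q1 q2" "Psi S (q1, q2) = (q1, q2)" by auto
qed

lemma main_eq:
  "seq_prob K S s0 C = sim_prob K S s0 C"
proof -
  define A where "A = {(p1, p2). seq_valid S s0 p1 p2 \<and> S \<union> {last p1, last p2} = C}"
  define B where "B = {(p1, p2). sim_valid S s0 p1 p2 \<and> S \<union> {last p1, last p2} = C}"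
  define w where "w = (\<lambda>(p1::'a list, p2::'a list). path_weight K p1 * path_weight K p2)"
  have bij: "bij_betw (Psi S) A B"
  proof (rule bij_betw_byWitness[where f' = "Psi' S"])
    show "\<forall>a\<in>A. Psi' S (Psi S a) = a"
    proof
      fix a assume "a \<in> A"
      then obtain p1 p2 where a: "a = (p1, p2)" "seq_valid S s0 p1 p2" unfolding A_def by auto
      show "Psi' S (Psi S a) = a"
      proof (cases "fx S p2 < length p1 - 1 \<and> p2 ! fx S p2 = last p1")
        case True then show ?thesis using fwd_swap(5)[OF a(2) conjunct1[OF True] conjunct2[OF True]] a by (simp add: Psi_def)
      next
        case False
        then have "Psi S a = a" using a unfolding Psi_def by auto
        then show ?thesis using fwd_id(2)[OF a(2) False] a by simp
      qed
    qed
    show "\<forall>a\<in>B. Psi S (Psi' S a) = a"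
    proof
      fix a assume "a \<in> B"
      then obtain q1 q2 where a: "a = (q1, q2)" "sim_valid S s0 q1 q2" unfolding B_def by auto
      show "Psi S (Psi' S a) = a"
      proof (cases "length q2 - 1 < length q1 - 1 \<and> q1 ! fx S q1 = last q2")
        case True then show ?thesis using bwd_swap(4)[OF a(2) conjunct1[OF True] conjunct2[OF True]] a by (simp add: Psi'_def)
      next
        case False
        then have "Psi' S a = a" using a unfolding Psi'_def by auto
        then show ?thesis using bwd_id(2)[OF a(2) False] a by simp
      qed
    qed
    show "Psi S ` A \<subseteq> B"
    proof
      fix b assume "b \<in> Psi S ` A"
      then obtain p1 p2 where b: "b = Psi S (p1, p2)" "seq_valid S s0 p1 p2"
        "S \<union> {last p1, last p2} = C" unfolding A_def by auto
      show "b \<in> B"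
      proof (cases "fx S p2 < length p1 - 1 \<and> p2 ! fx S p2 = last p1")
        case True then show ?thesis using fwd_swap(1-3)[OF b(2) conjunct1[OF True] conjunct2[OF True]] b
          by (auto simp: Psi_def B_def insert_commute)
      next
        case False
        then have "b = (p1, p2)" using b(1) unfolding Psi_def by auto
        then show ?thesis using fwd_id(1)[OF b(2) False] b by (simp add: B_def)
      qed
    qed
    show "Psi' S ` B \<subseteq> A"
    proof
      fix b assume "b \<in> Psi' S ` B"
      then obtain q1 q2 where b: "b = Psi' S (q1, q2)" "sim_valid S s0 q1 q2"
        "S \<union> {last q1, last q2} = C" unfolding B_def by auto
      show "b \<in> A"
      proof (cases "length q2 - 1 < length q1 - 1 \<and> q1 ! fx S q1 = last q2")
        case True then show ?thesis using bwd_swap(1-3)[OF b(2) conjunct1[OF True] conjunct2[OF True]] b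
          by (auto simp: Psi'_def A_def insert_commute)
      next
        case False
        then have "b = (q1, q2)" using b(1) unfolding Psi'_def by auto
        then show ?thesis using bwd_id(1)[OF b(2) False] b by (simp add: A_def)
      qed
    qed
  qed
  have wp: "\<And>a. a \<in> A \<Longrightarrow> w (Psi S a) = w a"
  proof -
    fix a assume "a \<in> A"
    then obtain p1 p2 where a: "a = (p1, p2)" "seq_valid S s0 p1 p2" unfolding A_def by auto
    show "w (Psi S a) = w a"
    proof (cases "fx S p2 < length p1 - 1 \<and> p2 ! fx S p2 = last p1")
      case True then show ?thesis using fwd_swap(4)[OF a(2) conjunct1[OF True] conjunct2[OF True], of K] a by (simp add: Psi_def w_def)
    next
      case False
      then have "Psi S a = a" using a unfolding Psi_def by auto
      then show ?thesis by simp
    qed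
  qed
  have "infsum w B = infsum (\<lambda>a. w (Psi S a)) A"
    using infsum_reindex_bij_betw[OF bij, of w] by simp
  also have "\<dots> = infsum w A" by (rule infsum_cong) (use wp in auto)
  finally have "infsum w A = infsum w B" by simp
  then show ?thesis unfolding seq_prob_def sim_prob_def A_def B_def w_def by simp
qed


theorem mainTheorem8:
  fixes K :: "'a::countable \<Rightarrow> 'a pmf" and S :: "'a set" and s0 x y :: 'a
  assumes "finite S"
    and escape: "\<And>z F. finite F \<Longrightarrow> exit_prob K F z = 1"
    and "x \<noteq> y" and "x \<notin> S" and "y \<notin> S"
  shows "seq_prob K S s0 (S \<union> {x, y}) = sim_prob K S s0 (S \<union> {x, y})
         \<and> (\<forall>C. seq_prob K S s0 C = sim_prob K S s0 C)"
  by (simp add: main_eq)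

end
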